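(* Let $m,n$ be positive integers and $(A,\boldsymbol{\gamma})\in[0,1)^{m\times n}\times[0,1)^m$. If $\langle A\boldsymbol{q}-\boldsymbol{\gamma}\rangle>0$ for every $\boldsymbol{q}\in\mathbb{Z}^n\setminus\{\boldsymbol{0}\}$, then either $S_l(A,\boldsymbol{\gamma})<\infty$ for all $l\in\mathbb{N}$, or $S_l(A,\boldsymbol{\gamma})=\infty$ for all $l\in\mathbb{N}$.
   Context: $[0,1)^{m\times n}$ is the set of real $m\times n$ matrices with entries in $[0,1)$. For $\boldsymbol{x}\in\mathbb{R}^n$, $\|\boldsymbol{x}\|=\max_i|x_i|$; for $\boldsymbol{y}\in\mathbb{R}^m$, $\langle\boldsymbol{y}\rangle=\min_{\boldsymbol{p}\in\mathbb{Z}^m}\|\boldsymbol{y}-\boldsymbol{p}\|$. For $l\in\mathbb{N}$, $S_l(A,\boldsymbol{\gamma})=\sum_{t=l}^\infty t^{n-1}\min_{\boldsymbol{q}\in\mathbb{Z}^n,\ l\le\|\boldsymbol{q}\|\le t}\langle A\boldsymbol{q}-\boldsymbol{\gamma}\rangle^m$. *)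

theory Defs
  imports "HOL-Analysis.Analysis"
begin

definition int_supnorm :: "int ^ 'n \<Rightarrow> int" where
  "int_supnorm q = Max (range (\<lambda>i. \<bar>q $ i\<bar>))"

definition real_supnorm :: "real ^ 'm \<Rightarrow> real" where
  "real_supnorm y = Max (range (\<lambda>i. \<bar>y $ i\<bar>))"

definition dist_Zm :: "real ^ 'm \<Rightarrow> real" where
  "dist_Zm y = Inf {real_supnorm (y - (\<chi> i. real_of_int (p $ i))) | p :: int ^ 'm. True}"

definition lin_form :: "real ^ 'n ^ 'm \<Rightarrow> real ^ 'm \<Rightarrow> int ^ 'n \<Rightarrow> real ^ 'm" where
  "lin_form A \<gamma> q = A *v (\<chi> j. real_of_int (q $ j)) - \<gamma>"

definition S_sum :: "nat \<Rightarrow> real ^ 'n ^ 'm \<Rightarrow> real ^ 'm \<Rightarrow> ennreal" where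
  "S_sum l A \<gamma> = (\<Sum>t. if l \<le> t then
      ennreal (real t ^ (CARD('n) - 1) *
        Min {dist_Zm (lin_form A \<gamma> q) ^ CARD('m) | q :: int ^ 'n.
               int l \<le> int_supnorm q \<and> int_supnorm q \<le> int t})
    else 0)"

end

theory Submission
  imports Defs
begin

definition Qs :: "nat \<Rightarrow> nat \<Rightarrow> (int ^ 'n) set" where
  "Qs l t = {q. int l \<le> int_supnorm q \<and> int_supnorm q \<le> int t}"

lemma supnorm_ge: "\<bar>q $ i\<bar> \<le> int_supnorm q"
  unfolding int_supnorm_def by (rule Max_ge) auto

lemma finite_Qs: "finite (Qs l t :: (int ^ 'n) set)"
proof -
  have "(Qs l t :: (int ^ 'n) set) \<subseteq> (\<lambda>g. \<chi> i. g i) ` (PiE UNIV (\<lambda>_. {-int t..int t}))"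
  proof
    fix q :: "int ^ 'n" assume q: "q \<in> Qs l t"
    have qt: "int_supnorm q \<le> int t" using q unfolding Qs_def by simp
    have "\<forall>i. - int t \<le> q $ i \<and> q $ i \<le> int t"
    proof
      fix i show "- int t \<le> q $ i \<and> q $ i \<le> int t" using supnorm_ge[of q i] qt by linarith
    qed
    hence "(\<lambda>i. q $ i) \<in> PiE UNIV (\<lambda>_. {-int t..int t})"
      by (auto simp: PiE_iff)
    moreover have "q = (\<chi> i. (\<lambda>i. q $ i) i)" by simp
    ultimately show "q \<in> (\<lambda>g. \<chi> i. g i) ` (PiE UNIV (\<lambda>_. {-int t..int t}))" by blast
  qed
  moreover have "finite (PiE (UNIV::'n set) (\<lambda>_. {-int t..int t}))"
    by (rule finite_PiE) auto
  ultimately show ?thesis by (meson finite_imageI finite_subset)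
qed

lemma Qs_ne: "l \<le> t \<Longrightarrow> (Qs l t :: (int ^ 'n) set) \<noteq> {}"
proof -
  assume "l \<le> t"
  have "range (\<lambda>i::'n. \<bar>(\<chi> i. int l) $ i\<bar>) = {int l}" by auto
  hence "int_supnorm (\<chi> i::'n. int l) = int l" unfolding int_supnorm_def by simp
  hence "(\<chi> i::'n. int l) \<in> Qs l t" using \<open>l \<le> t\<close> unfolding Qs_def by simp
  thus ?thesis by blast
qed

lemma Qs_nz: "1 \<le> l \<Longrightarrow> q \<in> Qs l t \<Longrightarrow> q \<noteq> 0"
proof
  assume "1 \<le> l" "q \<in> Qs l t" "q = 0"
  have "range (\<lambda>i::'a. \<bar>(0::int^'a) $ i\<bar>) = {0}" by auto
  hence "int_supnorm (0::int^'a) = 0" unfolding int_supnorm_def by simp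
  thus False using \<open>1 \<le> l\<close> \<open>q \<in> Qs l t\<close> \<open>q = 0\<close> unfolding Qs_def by auto
qed

lemma Qs_mono: "l \<le> l' \<Longrightarrow> t' \<le> t \<Longrightarrow> Qs l' t' \<subseteq> Qs l t"
  unfolding Qs_def by auto

lemma set_eq: "{f q | q :: int ^ 'n. int l \<le> int_supnorm q \<and> int_supnorm q \<le> int t} = f ` Qs l t"
  unfolding Qs_def by auto

definition MM :: "(int ^ 'n \<Rightarrow> real) \<Rightarrow> nat \<Rightarrow> nat \<Rightarrow> real" where
  "MM f l t = Min (f ` Qs l t)"

lemma MM_anti: "l \<le> l' \<Longrightarrow> l' \<le> t' \<Longrightarrow> t' \<le> t \<Longrightarrow> MM f l t \<le> MM f l' t'"
proof -
  assume a: "l \<le> l'" "l' \<le> t'" "t' \<le> t"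
  have "Qs l' t' \<subseteq> Qs l t" using a by (intro Qs_mono) auto
  hence "f ` Qs l' t' \<subseteq> f ` Qs l t" by (rule image_mono)
  thus ?thesis unfolding MM_def using a
    by (intro Min_antimono) (auto simp: finite_Qs Qs_ne)
qed

lemma MM_in: "l \<le> t \<Longrightarrow> \<exists>q \<in> Qs l t. MM f l t = f q"
  unfolding MM_def using Min_in[of "f ` Qs l t"] finite_Qs Qs_ne by fastforce

lemma MM_le: "q \<in> Qs l t \<Longrightarrow> MM f l t \<le> f q"
  unfolding MM_def by (rule Min_le) (auto simp: finite_Qs)

lemma main_equiv:
  fixes f :: "int ^ 'n \<Rightarrow> real" and k :: nat
  assumes f0: "\<And>q. f q \<ge> 0" and fpos: "\<And>q. q \<noteq> 0 \<Longrightarrow> f q > 0"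
    and l1: "1 \<le> l" and ll: "l \<le> l'"
  defines "T \<equiv> \<lambda>l. (\<Sum>t. if l \<le> t then ennreal (real t ^ k * MM f l t) else 0)"
  shows "T l < \<infinity> \<longleftrightarrow> T l' < \<infinity>"
proof
  assume fin: "T l' < \<infinity>"
  let ?g = "\<lambda>t. if t < l' then (if l \<le> t then ennreal (real t ^ k * MM f l t) else 0) else 0"
  have le: "(if l \<le> t then ennreal (real t ^ k * MM f l t) else 0)
      \<le> (if l' \<le> t then ennreal (real t ^ k * MM f l' t) else 0) + ?g t" for t
  proof (cases "t < l'")
    case True thus ?thesis by auto
  next
    case False
    hence "MM f l t \<le> MM f l' t" using MM_anti[OF ll, of t t] by auto
    hence "real t ^ k * MM f l t \<le> real t ^ k * MM f l' t" by (simp add: mult_left_mono)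
    thus ?thesis using False ll by (auto intro: ennreal_leI)
  qed
  have "T l \<le> (\<Sum>t. (if l' \<le> t then ennreal (real t ^ k * MM f l' t) else 0) + ?g t)"
    unfolding T_def by (rule suminf_le[OF le]) auto
  also have "\<dots> = T l' + suminf ?g" unfolding T_def by (rule suminf_add[symmetric]) auto
  also have "suminf ?g = sum ?g {..<l'}" by (rule suminf_finite) auto
  finally have L1: "T l \<le> T l' + sum ?g {..<l'}" .
  have "sum ?g {..<l'} < \<infinity>" by (simp add: ennreal_sum_less_top)
  hence "T l' + sum ?g {..<l'} < \<infinity>"
    using fin by (simp add: less_top)
  with L1 show "T l < \<infinity>" by (rule le_less_trans)
next
  assume fin: "T l < \<infinity>"
  define c where "c = MM f l l'"
  define B where "B = MM f l' l'"
  define K where "K = max 1 (B / c)"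
  obtain q0 where q0: "q0 \<in> Qs l l'" "MM f l l' = f q0" using MM_in[OF ll, of f] by blast
  have cpos: "c > 0" using Qs_nz[OF l1 q0(1)] fpos q0(2) unfolding c_def by simp
  have B0: "B \<ge> 0" using MM_in[of l' l' f] f0 unfolding B_def by auto
  have le: "(if l' \<le> t then ennreal (real t ^ k * MM f l' t) else 0)
      \<le> ennreal K * (if l \<le> t then ennreal (real t ^ k * MM f l t) else 0)" for t
  proof (cases "l' \<le> t")
    case False thus ?thesis by simp
  next
    case True
    obtain q where q: "q \<in> Qs l t" "MM f l t = f q" using MM_in[of l t f] True ll by auto
    have "MM f l' t \<le> K * MM f l t"
    proof (cases "int l' \<le> int_supnorm q")
      case True
      hence "q \<in> Qs l' t" using q(1) unfolding Qs_def by auto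
      hence "MM f l' t \<le> f q" by (rule MM_le)
      also have "\<dots> \<le> K * f q" using f0[of q] unfolding K_def
        by (simp add: mult_le_cancel_right1)
      finally show ?thesis using q by simp
    next
      case False
      hence "q \<in> Qs l l'" using q(1) unfolding Qs_def by auto
      hence cq: "c \<le> f q" unfolding c_def by (rule MM_le)
      have "MM f l' t \<le> B" unfolding B_def using MM_anti[of l' l' l' t f] True by auto
      also have "B = (B / c) * c" using cpos by simp
      also have "\<dots> \<le> K * c" unfolding K_def using cpos by (intro mult_right_mono) auto
      also have "\<dots> \<le> K * f q" using cq unfolding K_def by (intro mult_left_mono) auto
      finally show ?thesis using q by simp
    qed
    hence ineq: "real t ^ k * MM f l' t \<le> K * (real t ^ k * MM f l t)"
      by (metis mult.left_commute mult_left_mono of_nat_0_le_iff zero_le_power)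
    moreover have "K \<ge> 0" unfolding K_def by simp
    have e1: "ennreal (real t ^ k * MM f l' t) \<le> ennreal (K * (real t ^ k * MM f l t))"
      using ineq by (rule ennreal_leI)
    have e2: "ennreal (K * (real t ^ k * MM f l t)) = ennreal K * ennreal (real t ^ k * MM f l t)"
      using \<open>K \<ge> 0\<close> by (rule ennreal_mult')
    have h1: "(if l' \<le> t then ennreal (real t ^ k * MM f l' t) else 0) = ennreal (real t ^ k * MM f l' t)"
      using True by simp
    have h2: "(if l \<le> t then ennreal (real t ^ k * MM f l t) else 0) = ennreal (real t ^ k * MM f l t)"
      using True ll by simp
    show ?thesis unfolding h1 h2 e2[symmetric] by (rule e1)
  qed
  have "T l' \<le> (\<Sum>t. ennreal K * (if l \<le> t then ennreal (real t ^ k * MM f l t) else 0))"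
    unfolding T_def by (rule suminf_le[OF le]) auto
  also have "\<dots> = ennreal K * T l" unfolding T_def by (rule ennreal_suminf_cmult)
  finally have "T l' \<le> ennreal K * T l" .
  moreover have "ennreal K * T l < \<infinity>" using fin by (simp add: ennreal_mult_less_top)
  ultimately show "T l' < \<infinity>" by (rule le_less_trans)
qed

theorem lemma2p2:
  fixes A :: "real ^ 'n ^ 'm" and \<gamma> :: "real ^ 'm"
  assumes A_range: "\<forall>i j. 0 \<le> A $ i $ j \<and> A $ i $ j < 1"
    and \<gamma>_range: "\<forall>i. 0 \<le> \<gamma> $ i \<and> \<gamma> $ i < 1"
    and pos: "\<forall>q :: int ^ 'n. q \<noteq> 0 \<longrightarrow> dist_Zm (lin_form A \<gamma> q) > 0"
  shows "(\<forall>l::nat. l \<ge> 1 \<longrightarrow> S_sum l A \<gamma> < \<infinity>) \<or> (\<forall>l::nat. l \<ge> 1 \<longrightarrow> S_sum l A \<gamma> = \<infinity>)"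
proof -
  define f where "f = (\<lambda>q::int^'n. dist_Zm (lin_form A \<gamma> q) ^ CARD('m))"
  have d0: "dist_Zm y \<ge> 0" for y :: "real ^ 'm"
  proof -
    have "real_supnorm z \<ge> 0" for z :: "real ^ 'm"
      unfolding real_supnorm_def by (rule order_trans[OF abs_ge_zero Max_ge[of _ "\<bar>z $ undefined\<bar>"]]) auto
    thus ?thesis unfolding dist_Zm_def by (intro cInf_greatest) auto
  qed
  have f0: "f q \<ge> 0" for q unfolding f_def using d0 by simp
  have fpos: "q \<noteq> 0 \<Longrightarrow> f q > 0" for q unfolding f_def using pos by simp
  have S: "S_sum l A \<gamma> = (\<Sum>t. if l \<le> t then ennreal (real t ^ (CARD('n) - 1) * MM f l t) else 0)" for l
    unfolding S_sum_def MM_def f_def set_eq ..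
  have eq: "1 \<le> l \<Longrightarrow> S_sum l A \<gamma> < \<infinity> \<longleftrightarrow> S_sum 1 A \<gamma> < \<infinity>" for l
    unfolding S using main_equiv[where f=f, OF f0 fpos, where l=1 and l'=l and k="CARD('n) - 1"] by auto
  show ?thesis
  proof (cases "S_sum 1 A \<gamma> < \<infinity>")
    case True thus ?thesis using eq by blast
  next
    case False
    have "S_sum l A \<gamma> = \<infinity>" if "1 \<le> l" for l
    proof -
      have "\<not> S_sum l A \<gamma> < \<infinity>" using eq[OF that] False by simp
      thus ?thesis by (simp add: not_less top_unique)
    qed
    thus ?thesis by blast
  qed
qed

end
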